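(* Let $S=\langle P,\varphi\rangle$ be a SUT model, $t$ a strength and $N\ge 1$ an integer. The propositional formula $Sat_{CCX}^{N,t,S}=X\wedge CCX\wedge SUTX$ (defined in the context) is satisfiable if and only if a covering array $CA(N;t,S)$ exists.
   Context: A SUT model is $S=\langle P,\varphi\rangle$, where $P$ is a finite set of parameters, each $p\in P$ having a finite nonempty domain $d(p)$, and $\varphi$ is a propositional formula whose atoms have the form $(p=v)$ with $p\in P$, $v\in d(p)$. A test case is a full assignment $A$ giving each $p\in P$ a value in $d(p)$ such that $\varphi$ evaluates to true when each atom $(p=v)$ is read as true iff $A(p)=v$; it is assumed that at least one test case exists. Fix a strength $t$ with $1\le t\le |P|$. A $t$-tuple is an assignment of values (from their domains) to exactly $t$ distinct parameters, viewed as a set of pairs $(p,v)$. A test case covers a $t$-tuple $\tau$ if it assigns $v$ to $p$ for every $(p,v)\in\tau$. A $t$-tuple is allowed if some test case covers it; $\mathcal{T}_a$ denotes the set of allowed $t$-tuples. A covering array $CA(N;t,S)$ is a list of $N$ test cases (repetitions allowed) such that every allowed $t$-tuple is covered by at least one of them. Write $[N]=\{1,\dots,N\}$. Propositional variables: $x_{i,p,v}$ for $i\in[N]$, $p\in P$, $v\in d(p)$, and $c^i_\tau$ for $i\in\{0,1,\dots,N\}$, $\tau\in\mathcal T_a$. Constraints (each read as a Boolean constraint; any satisfiability-preserving CNF translation may be used): (X) for every $i\in[N]$ and $p\in P$: exactly one of $\{x_{i,p,v}: v\in d(p)\}$ is true; (SUTX) for every $i\in[N]$: the formula obtained from $\varphi$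 by replacing every atom $(p=v)$ with $x_{i,p,v}$; (CCX) consisting of (a) for every $i\in[N]$, $\tau\in\mathcal T_a$, $(p,v)\in\tau$: $c^i_\tau\rightarrow (c^{i-1}_\tau\vee x_{i,p,v})$; (b) for every $\tau\in\mathcal T_a$ the unit clause $c^N_\tau$; (c) for every $\tau\in\mathcal T_a$: $c^N_\tau\rightarrow\neg c^0_\tau$. *)

theory Defs
  imports Main
begin

datatype 'a form =
    Atom 'a
  | TT
  | FF
  | Neg "'a form"
  | Conj "'a form" "'a form"
  | Disj "'a form" "'a form"
  | Impl "'a form" "'a form"
  | Iff "'a form" "'a form"

fun eval :: "('a \<Rightarrow> bool) \<Rightarrow> 'a form \<Rightarrow> bool" where
  "eval s (Atom a) = s a"
| "eval s TT = True"
| "eval s FF = False"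
| "eval s (Neg f) = (\<not> eval s f)"
| "eval s (Conj f g) = (eval s f \<and> eval s g)"
| "eval s (Disj f g) = (eval s f \<or> eval s g)"
| "eval s (Impl f g) = (eval s f \<longrightarrow> eval s g)"
| "eval s (Iff f g) = (eval s f \<longleftrightarrow> eval s g)"

fun atoms :: "'a form \<Rightarrow> 'a set" where
  "atoms (Atom a) = {a}"
| "atoms TT = {}"
| "atoms FF = {}"
| "atoms (Neg f) = atoms f"
| "atoms (Conj f g) = atoms f \<union> atoms g"
| "atoms (Disj f g) = atoms f \<union> atoms g"
| "atoms (Impl f g) = atoms f \<union> atoms g"
| "atoms (Iff f g) = atoms f \<union> atoms g"

text \<open>A SUT model: parameters P, domains d, constraint phi whose atoms (p,v) stand for (p = v).\<close>
definition sut_model :: "'p set \<Rightarrow> ('p \<Rightarrow> 'v set) \<Rightarrow> ('p \<times> 'v) form \<Rightarrow> bool" where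
  "sut_model P d \<phi> \<longleftrightarrow> finite P \<and> (\<forall>p\<in>P. finite (d p) \<and> d p \<noteq> {})
     \<and> atoms \<phi> \<subseteq> {(p, v). p \<in> P \<and> v \<in> d p}"

text \<open>A test case: a full assignment of values (only its values on P matter) satisfying phi.\<close>
definition test_case :: "'p set \<Rightarrow> ('p \<Rightarrow> 'v set) \<Rightarrow> ('p \<times> 'v) form \<Rightarrow> ('p \<Rightarrow> 'v) \<Rightarrow> bool" where
  "test_case P d \<phi> A \<longleftrightarrow> (\<forall>p\<in>P. A p \<in> d p) \<and> eval (\<lambda>(p, v). A p = v) \<phi>"

definition t_tuple :: "'p set \<Rightarrow> ('p \<Rightarrow> 'v set) \<Rightarrow> nat \<Rightarrow> ('p \<times> 'v) set \<Rightarrow> bool" where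
  "t_tuple P d t \<tau> \<longleftrightarrow> finite \<tau> \<and> card \<tau> = t \<and> (\<forall>(p, v)\<in>\<tau>. p \<in> P \<and> v \<in> d p)
     \<and> (\<forall>(p, v)\<in>\<tau>. \<forall>(p', v')\<in>\<tau>. p = p' \<longrightarrow> v = v')"

definition covers :: "('p \<Rightarrow> 'v) \<Rightarrow> ('p \<times> 'v) set \<Rightarrow> bool" where
  "covers A \<tau> \<longleftrightarrow> (\<forall>(p, v)\<in>\<tau>. A p = v)"

definition allowed_tuples :: "'p set \<Rightarrow> ('p \<Rightarrow> 'v set) \<Rightarrow> ('p \<times> 'v) form \<Rightarrow> nat \<Rightarrow> ('p \<times> 'v) set set" where
  "allowed_tuples P d \<phi> t = {\<tau>. t_tuple P d t \<tau> \<and> (\<exists>A. test_case P d \<phi> A \<and> covers A \<tau>)}"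

definition covering_array :: "nat \<Rightarrow> nat \<Rightarrow> 'p set \<Rightarrow> ('p \<Rightarrow> 'v set) \<Rightarrow> ('p \<times> 'v) form \<Rightarrow> ('p \<Rightarrow> 'v) list \<Rightarrow> bool" where
  "covering_array N t P d \<phi> As \<longleftrightarrow> length As = N \<and> (\<forall>A\<in>set As. test_case P d \<phi> A)
     \<and> (\<forall>\<tau>\<in>allowed_tuples P d \<phi> t. \<exists>A\<in>set As. covers A \<tau>)"

datatype ('p, 'v) encvar = X nat 'p 'v | C nat "('p \<times> 'v) set"

definition constr_X :: "nat \<Rightarrow> 'p set \<Rightarrow> ('p \<Rightarrow> 'v set) \<Rightarrow> (('p, 'v) encvar \<Rightarrow> bool) \<Rightarrow> bool" where
  "constr_X N P d \<sigma> \<longleftrightarrow> (\<forall>i\<in>{1..N}. \<forall>p\<in>P. \<exists>!v. v \<in> d p \<and> \<sigma> (X i p v))"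

definition constr_SUTX :: "nat \<Rightarrow> ('p \<times> 'v) form \<Rightarrow> (('p, 'v) encvar \<Rightarrow> bool) \<Rightarrow> bool" where
  "constr_SUTX N \<phi> \<sigma> \<longleftrightarrow> (\<forall>i\<in>{1..N}. eval \<sigma> (map_form (\<lambda>(p, v). X i p v) \<phi>))"

definition constr_CCX :: "nat \<Rightarrow> nat \<Rightarrow> 'p set \<Rightarrow> ('p \<Rightarrow> 'v set) \<Rightarrow> ('p \<times> 'v) form
    \<Rightarrow> (('p, 'v) encvar \<Rightarrow> bool) \<Rightarrow> bool" where
  "constr_CCX N t P d \<phi> \<sigma> \<longleftrightarrow>
     (\<forall>i\<in>{1..N}. \<forall>\<tau>\<in>allowed_tuples P d \<phi> t. \<forall>(p, v)\<in>\<tau>.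
         \<sigma> (C i \<tau>) \<longrightarrow> (\<sigma> (C (i - 1) \<tau>) \<or> \<sigma> (X i p v)))
   \<and> (\<forall>\<tau>\<in>allowed_tuples P d \<phi> t. \<sigma> (C N \<tau>))
   \<and> (\<forall>\<tau>\<in>allowed_tuples P d \<phi> t. \<sigma> (C N \<tau>) \<longrightarrow> \<not> \<sigma> (C 0 \<tau>))"

definition Sat_CCX :: "nat \<Rightarrow> nat \<Rightarrow> 'p set \<Rightarrow> ('p \<Rightarrow> 'v set) \<Rightarrow> ('p \<times> 'v) form
    \<Rightarrow> (('p, 'v) encvar \<Rightarrow> bool) \<Rightarrow> bool" where
  "Sat_CCX N t P d \<phi> \<sigma> \<longleftrightarrow> constr_X N P d \<sigma> \<and> constr_CCX N t P d \<phi> \<sigma> \<and> constr_SUTX N \<phi> \<sigma>"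

definition satisfiable_Sat_CCX :: "nat \<Rightarrow> nat \<Rightarrow> 'p set \<Rightarrow> ('p \<Rightarrow> 'v set) \<Rightarrow> ('p \<times> 'v) form \<Rightarrow> bool" where
  "satisfiable_Sat_CCX N t P d \<phi> \<longleftrightarrow> (\<exists>\<sigma>. Sat_CCX N t P d \<phi> \<sigma>)"

end

theory Submission
  imports Defs
begin

lemma eval_map_form: "eval s (map_form f \<phi>) = eval (s \<circ> f) \<phi>"
  by (induction \<phi>) auto

lemma eval_cong_atoms: "(\<And>a. a \<in> atoms \<phi> \<Longrightarrow> s a = s' a) \<Longrightarrow> eval s \<phi> = eval s' \<phi>"
  by (induction \<phi>) auto

lemma descend:
  assumes "\<sigma> (C (n::nat) \<tau>)" "\<not> \<sigma> (C 0 \<tau>)"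
  shows "\<exists>i\<in>{1..n}. \<sigma> (C i \<tau>) \<and> \<not> \<sigma> (C (i - 1) \<tau>)"
  using assms
proof (induction n)
  case 0 then show ?case by simp
next
  case (Suc n)
  show ?case
  proof (cases "\<sigma> (C n \<tau>)")
    case True
    then obtain i where "i\<in>{1..n}" "\<sigma> (C i \<tau>) \<and> \<not> \<sigma> (C (i - 1) \<tau>)" using Suc by blast
    then show ?thesis by force
  next
    case False
    then show ?thesis using Suc.prems by force
  qed
qed

theorem proposition2:
  fixes P :: "'p set" and d :: "'p \<Rightarrow> 'v set" and \<phi> :: "('p \<times> 'v) form"
    and t N :: nat
  assumes "sut_model P d \<phi>"
    and "\<exists>A. test_case P d \<phi> A"
    and "1 \<le> t" and "t \<le> card P"
    and "N \<ge> 1"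
  shows "satisfiable_Sat_CCX N t P d \<phi> \<longleftrightarrow> (\<exists>As. covering_array N t P d \<phi> As)"
proof
  assume "satisfiable_Sat_CCX N t P d \<phi>"
  then obtain \<sigma> where S: "Sat_CCX N t P d \<phi> \<sigma>" unfolding satisfiable_Sat_CCX_def by blast
  have CX: "constr_X N P d \<sigma>" and CC: "constr_CCX N t P d \<phi> \<sigma>" and CS: "constr_SUTX N \<phi> \<sigma>"
    using S unfolding Sat_CCX_def by auto
  define A where "A i p = (THE v. v \<in> d p \<and> \<sigma> (X i p v))" for i p
  have Aprop: "A i p \<in> d p \<and> \<sigma> (X i p (A i p))" if "i \<in> {1..N}" "p \<in> P" for i p
    using CX that unfolding constr_X_def A_def by (metis (no_types, lifting) theI')
  have Aeq: "\<sigma> (X i p v) \<longleftrightarrow> A i p = v" if "i \<in> {1..N}" "p \<in> P" "v \<in> d p" for i p v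
    using CX that Aprop[OF that(1,2)] unfolding constr_X_def by metis
  have tc: "test_case P d \<phi> (A i)" if "i \<in> {1..N}" for i
  proof -
    have "eval \<sigma> (map_form (\<lambda>(p, v). X i p v) \<phi>)" using CS that unfolding constr_SUTX_def by blast
    then have "eval (\<sigma> \<circ> (\<lambda>(p, v). X i p v)) \<phi>" by (simp add: eval_map_form)
    moreover have "eval (\<sigma> \<circ> (\<lambda>(p, v). X i p v)) \<phi> = eval (\<lambda>(p, v). A i p = v) \<phi>"
    proof (rule eval_cong_atoms)
      fix a assume "a \<in> atoms \<phi>"
      then obtain p v where "a = (p, v)" "p \<in> P" "v \<in> d p" using assms(1) unfolding sut_model_def by blast
      then show "(\<sigma> \<circ> (\<lambda>(p, v). X i p v)) a = (\<lambda>(p, v). A i p = v) a" using Aeq[OF that] by simp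
    qed
    ultimately show ?thesis unfolding test_case_def using Aprop[OF that] by blast
  qed
  define As where "As = map A [1..<N+1]"
  have "covering_array N t P d \<phi> As"
    unfolding covering_array_def
  proof (intro conjI ballI)
    show "length As = N" unfolding As_def by simp
  next
    fix B assume "B \<in> set As" then show "test_case P d \<phi> B" unfolding As_def using tc by auto
  next
    fix \<tau> assume tau: "\<tau> \<in> allowed_tuples P d \<phi> t"
    have "\<sigma> (C N \<tau>)" "\<not> \<sigma> (C 0 \<tau>)" using CC tau unfolding constr_CCX_def by auto
    then obtain i where i: "i\<in>{1..N}" "\<sigma> (C i \<tau>)" "\<not> \<sigma> (C (i - 1) \<tau>)" using descend by blast
    have "covers (A i) \<tau>" unfolding covers_def
    proof (clarify)
      fix p v assume pv: "(p, v) \<in> \<tau>"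
      have "\<sigma> (X i p v)" using CC tau i pv unfolding constr_CCX_def by fast
      moreover have "p \<in> P" "v \<in> d p" using tau pv unfolding allowed_tuples_def t_tuple_def by auto
      ultimately show "A i p = v" using Aeq i by blast
    qed
    moreover have "A i \<in> set As" unfolding As_def set_map by (rule imageI) (use i in auto)
    ultimately show "\<exists>B\<in>set As. covers B \<tau>" by blast
  qed
  then show "\<exists>As. covering_array N t P d \<phi> As" by blast
next
  assume "\<exists>As. covering_array N t P d \<phi> As"
  then obtain As where CA: "covering_array N t P d \<phi> As" by blast
  have len: "length As = N" and tcs: "\<And>B. B \<in> set As \<Longrightarrow> test_case P d \<phi> B"
    and cov: "\<And>\<tau>. \<tau> \<in> allowed_tuples P d \<phi> t \<Longrightarrow> \<exists>B\<in>set As. covers B \<tau>"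
    using CA unfolding covering_array_def by auto
  define \<sigma> where "\<sigma> e = (case e of X i p v \<Rightarrow> (As ! (i - 1)) p = v
     | C i \<tau> \<Rightarrow> (\<exists>j\<in>{1..i}. j \<le> N \<and> covers (As ! (j - 1)) \<tau>))" for e
  have tci: "test_case P d \<phi> (As ! (i - 1))" if "i \<in> {1..N}" for i
  proof -
    have "i - 1 < length As" using len that by auto
    then show ?thesis using tcs nth_mem by blast
  qed
  have "constr_X N P d \<sigma>" unfolding constr_X_def
  proof (intro ballI)
    fix i p assume "i \<in> {1..N}" "p \<in> P"
    then show "\<exists>!v. v \<in> d p \<and> \<sigma> (X i p v)" using tci unfolding \<sigma>_def test_case_def by auto
  qed
  moreover have "constr_SUTX N \<phi> \<sigma>" unfolding constr_SUTX_def
  proof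
    fix i assume i: "i \<in> {1..N}"
    have "eval (\<sigma> \<circ> (\<lambda>(p, v). X i p v)) \<phi> = eval (\<lambda>(p, v). (As ! (i - 1)) p = v) \<phi>"
      by (rule eval_cong_atoms) (auto simp: \<sigma>_def)
    then show "eval \<sigma> (map_form (\<lambda>(p, v). X i p v) \<phi>)"
      using tci[OF i] unfolding test_case_def by (simp add: eval_map_form)
  qed
  moreover have "constr_CCX N t P d \<phi> \<sigma>" unfolding constr_CCX_def
  proof (intro conjI ballI)
    fix i \<tau> pv assume i: "i \<in> {1..N}" and tau: "\<tau> \<in> allowed_tuples P d \<phi> t" and pv: "pv \<in> \<tau>"
    obtain p v where pv': "pv = (p, v)" by fastforce
    have "\<sigma> (C i \<tau>) \<longrightarrow> \<sigma> (C (i - 1) \<tau>) \<or> \<sigma> (X i p v)"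
    proof
      assume "\<sigma> (C i \<tau>)"
      then obtain j where j: "j \<in> {1..i}" "j \<le> N" "covers (As ! (j - 1)) \<tau>" unfolding \<sigma>_def by auto
      show "\<sigma> (C (i - 1) \<tau>) \<or> \<sigma> (X i p v)"
      proof (cases "j = i")
        case True
        then show ?thesis using j pv pv' unfolding \<sigma>_def covers_def by auto
      next
        case False
        then show ?thesis using j unfolding \<sigma>_def by (intro disjI1) force
      qed
    qed
    then show "case pv of (p, v) \<Rightarrow> \<sigma> (C i \<tau>) \<longrightarrow> \<sigma> (C (i - 1) \<tau>) \<or> \<sigma> (X i p v)"
      using pv' by simp
  next
    fix \<tau> assume tau: "\<tau> \<in> allowed_tuples P d \<phi> t"
    obtain B where B: "B \<in> set As" "covers B \<tau>" using cov[OF tau] by blast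
    then obtain k where k: "k < N" "As ! k = B" using len by (metis in_set_conv_nth)
    show "\<sigma> (C N \<tau>)" unfolding \<sigma>_def using k B
      by (auto intro!: bexI[where x="Suc k"])
  next
    fix \<tau> assume "\<tau> \<in> allowed_tuples P d \<phi> t"
    show "\<sigma> (C N \<tau>) \<longrightarrow> \<not> \<sigma> (C 0 \<tau>)" unfolding \<sigma>_def by simp
  qed
  ultimately show "satisfiable_Sat_CCX N t P d \<phi>"
    unfolding satisfiable_Sat_CCX_def Sat_CCX_def by blast
qed

end
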